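(* Let $P$ be a set of $n$ points chosen independently and uniformly at random from the unit cube $[0,1]^d$, and let $C$ be a convex body in $\mathbb{R}^d$ with $\mathrm{Vol}(C)\geq c$ for some constant $c\leq 1$. Then $\mathbb{E}[\operatorname{price}(P,C)]=O(n^{1-2/(d+1)})$, where the $O$ hides constants depending on $d$ and $C$.
   Context: For a closed convex $d$-dimensional polytope $F$, $f_k(F)$ denotes its number of $k$-dimensional faces. The inner fence $F_{\mathrm{in}}$ is a closed convex $d$-dimensional polytope with the minimum number of vertices such that $F_{\mathrm{in}}\subseteq C$ and $C\cap P=F_{\mathrm{in}}\cap P$. The outer fence $F_{\mathrm{out}}$ is a closed convex $d$-dimensional polytope with the minimum number of facets such that $C\subseteq F_{\mathrm{out}}$ and $C\cap P=F_{\mathrm{out}}\cap P$. The separation price is $\operatorname{price}(P,C)=f_0(F_{\mathrm{in}})+f_{d-1}(F_{\mathrm{out}})$. *)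

theory Defs
  imports "HOL-Analysis.Analysis" "HOL-Probability.Probability"
begin

definition num_vertices :: "'a::euclidean_space set \<Rightarrow> nat" where
  "num_vertices F = card {v. v extreme_point_of F}"

definition num_facets :: "'a::euclidean_space set \<Rightarrow> nat" where
  "num_facets F = card {G. G facet_of F}"

text \<open>Closed convex full-dimensional polytope (polytope already implies closed and convex).\<close>
definition full_polytope :: "'a::euclidean_space set \<Rightarrow> bool" where
  "full_polytope F \<longleftrightarrow> polytope F \<and> closed F \<and> convex F \<and> aff_dim F = int DIM('a)"

definition is_inner_candidate :: "'a::euclidean_space set \<Rightarrow> 'a set \<Rightarrow> 'a set \<Rightarrow> bool" where
  "is_inner_candidate P C F \<longleftrightarrow> full_polytope F \<and> F \<subseteq> C \<and> C \<inter> P = F \<inter> P"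

definition is_outer_candidate :: "'a::euclidean_space set \<Rightarrow> 'a set \<Rightarrow> 'a set \<Rightarrow> bool" where
  "is_outer_candidate P C F \<longleftrightarrow> full_polytope F \<and> C \<subseteq> F \<and> C \<inter> P = F \<inter> P"

definition inner_fence_vertices :: "'a::euclidean_space set \<Rightarrow> 'a set \<Rightarrow> nat" where
  "inner_fence_vertices P C = (LEAST k. \<exists>F. is_inner_candidate P C F \<and> num_vertices F = k)"

definition outer_fence_facets :: "'a::euclidean_space set \<Rightarrow> 'a set \<Rightarrow> nat" where
  "outer_fence_facets P C = (LEAST k. \<exists>F. is_outer_candidate P C F \<and> num_facets F = k)"

definition price :: "'a::euclidean_space set \<Rightarrow> 'a set \<Rightarrow> nat" where
  "price P C = inner_fence_vertices P C + outer_fence_facets P C"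

definition convex_body :: "'a::euclidean_space set \<Rightarrow> bool" where
  "convex_body C \<longleftrightarrow> compact C \<and> convex C \<and> interior C \<noteq> {}"

definition unit_cube_sample :: "nat \<Rightarrow> (nat \<Rightarrow> 'a::euclidean_space) measure" where
  "unit_cube_sample n = PiM {..<n} (\<lambda>_. uniform_measure lborel (cbox 0 One))"

end

theory Submission
  imports Defs
begin

lemma facets_card_le:
  fixes H :: "'a::euclidean_space set set"
  assumes finH: "finite H" and hs: "\<forall>h\<in>H. \<exists>a b. a \<noteq> 0 \<and> h = {x. a \<bullet> x \<le> b}"
    and int: "interior (\<Inter>H) \<noteq> {}"
  shows "card {G. G facet_of \<Inter>H} \<le> card H"
proof -
  let ?S = "\<Inter>H"
  define Fs where "Fs = {F. F \<subseteq> H \<and> \<Inter>F = ?S}"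
  have "H \<in> Fs" by (simp add: Fs_def)
  then obtain F where F: "F \<in> Fs" and Fmin: "\<forall>F'. F' \<in> Fs \<longrightarrow> card F \<le> card F'"
    using ex_has_least_nat[of "\<lambda>F. F \<in> Fs" H card] by blast
  have FH: "F \<subseteq> H" and FS: "\<Inter>F = ?S" using F by (auto simp: Fs_def)
  have finF: "finite F" using FH finH finite_subset by blast
  have aff: "affine hull ?S = UNIV" using int affine_hull_nonempty_interior by blast
  have "\<forall>h\<in>F. \<exists>p. fst p \<noteq> 0 \<and> h = {x. fst p \<bullet> x \<le> snd p}"
    using hs FH by force
  then obtain f where f: "\<forall>h\<in>F. fst (f h) \<noteq> 0 \<and> h = {x. fst (f h) \<bullet> x \<le> snd (f h)}"
    by (metis bchoice)
  define a where "a h = fst (f h)" for h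
  define b where "b h = snd (f h)" for h
  have ab: "a h \<noteq> 0 \<and> h = {x. a h \<bullet> x \<le> b h}" if "h \<in> F" for h
    using f that by (simp add: a_def b_def)
  have seq: "?S = affine hull ?S \<inter> \<Inter>F" using aff FS by simp
  have psub: "?S \<subset> affine hull ?S \<inter> \<Inter>F'" if "F' \<subset> F" for F'
  proof -
    have sub: "?S \<subseteq> \<Inter>F'" using that FS by blast
    have "\<Inter>F' \<noteq> ?S"
    proof
      assume "\<Inter>F' = ?S"
      then have "F' \<in> Fs" using that FH by (auto simp: Fs_def)
      moreover have "card F' < card F" using that finF psubset_card_mono by blast
      ultimately show False using Fmin by fastforce
    qed
    then show ?thesis using sub aff by auto
  qed
  have "{G. G facet_of ?S} \<subseteq> (\<lambda>h. ?S \<inter> {x. a h \<bullet> x = b h}) ` F"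
    using facet_of_polyhedron_explicit[OF finF seq ab psub] by blast
  then have "card {G. G facet_of ?S} \<le> card ((\<lambda>h. ?S \<inter> {x. a h \<bullet> x = b h}) ` F)"
    using finF by (intro card_mono) auto
  also have "\<dots> \<le> card F" by (rule card_image_le[OF finF])
  also have "\<dots> \<le> card H" using FH finH by (rule card_mono[rotated])
  finally show ?thesis .
qed

lemma vertices_hull_le:
  fixes V :: "'a::euclidean_space set"
  assumes "finite V"
  shows "num_vertices (convex hull V) \<le> card V"
  unfolding num_vertices_def
  using assms extreme_point_of_convex_hull by (intro card_mono) auto

lemma pow_minus_one_le:
  fixes x :: real
  assumes "0 \<le> x" "x \<le> 1"
  shows "(1 + x) ^ k - 1 \<le> (2 ^ k - 1) * x"
proof (induction k)
  case 0 then show ?case by simp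
next
  case (Suc k)
  have "(1 + x) ^ Suc k - 1 = (1 + x) * ((1 + x) ^ k - 1) + x" by (simp add: algebra_simps)
  also have "\<dots> \<le> 2 * ((2 ^ k - 1) * x) + x"
  proof -
    have "(1 + x) ^ k - 1 \<ge> 0" using assms by simp
    then have "(1 + x) * ((1 + x) ^ k - 1) \<le> 2 * ((1 + x) ^ k - 1)" using assms
      by (intro mult_right_mono) auto
    also have "\<dots> \<le> 2 * ((2 ^ k - 1) * x)" using Suc by simp
    finally show ?thesis by simp
  qed
  also have "\<dots> = (2 ^ Suc k - 1) * x" by (simp add: algebra_simps)
  finally show ?case .
qed

lemma scale_cover:
  fixes S T :: "'a::euclidean_space set"
  assumes "convex S" "cball c0 r \<subseteq> S" "r > 0" "\<eta> > 0"
    and T: "\<And>x. x \<in> T \<Longrightarrow> \<exists>y\<in>S. norm (x - y) \<le> \<eta>"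
  shows "T \<subseteq> (\<lambda>x. (1 + \<eta> / r) *\<^sub>R x + (c0 - (1 + \<eta> / r) *\<^sub>R c0)) ` S"
proof
  fix x assume "x \<in> T"
  then obtain y where y: "y \<in> S" "norm (x - y) \<le> \<eta>" using T by blast
  define l where "l = 1 + \<eta> / r"
  have l: "l > 1" using assms by (simp add: l_def)
  define e where "e = x - y"
  define z where "z = c0 + (r / \<eta>) *\<^sub>R e"
  have "norm ((r / \<eta>) *\<^sub>R e) = (r / \<eta>) * norm e" using assms by simp
  also have "\<dots> \<le> (r / \<eta>) * \<eta>" using y assms by (intro mult_left_mono) (auto simp: e_def)
  also have "\<dots> = r" using assms by simp
  finally have "z \<in> cball c0 r" by (simp add: z_def dist_norm)
  then have zS: "z \<in> S" using assms by blast
  define x' where "x' = (1 / l) *\<^sub>R y + (1 - 1 / l) *\<^sub>R z"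
  have "x' \<in> S" unfolding x'_def
    using l y zS \<open>convex S\<close> by (intro convexD) auto
  moreover have "x = l *\<^sub>R x' + (c0 - l *\<^sub>R c0)"
  proof -
    have "l *\<^sub>R x' = y + (l - 1) *\<^sub>R z"
      using l by (simp add: x'_def algebra_simps)
    also have "(l - 1) *\<^sub>R z = (l - 1) *\<^sub>R c0 + e"
      using assms by (simp add: z_def l_def algebra_simps)
    finally show ?thesis by (simp add: e_def algebra_simps)
  qed
  ultimately show "x \<in> (\<lambda>x. (1 + \<eta> / r) *\<^sub>R x + (c0 - (1 + \<eta> / r) *\<^sub>R c0)) ` S"
    unfolding l_def[symmetric] by blast
qed

lemma cube_measure: "emeasure lborel (cbox 0 (One :: 'a::euclidean_space)) = 1"
  by (simp add: emeasure_lborel_cbox_eq)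

lemma prob_cube: "prob_space (uniform_measure lborel (cbox 0 (One :: 'a::euclidean_space)))"
  by (rule prob_space_uniform_measure) (simp_all add: cube_measure)

lemma prob_sample: "prob_space (unit_cube_sample n :: (nat \<Rightarrow> 'a::euclidean_space) measure)"
  unfolding unit_cube_sample_def by (intro prob_space_PiM prob_cube)

lemma card_le_ind:
  fixes \<omega> :: "nat \<Rightarrow> 'a"
  shows "ennreal (real (card (\<omega> ` {..<n} \<inter> R))) \<le> (\<Sum>i<n. indicator R (\<omega> i))"
proof -
  have "\<omega> ` {..<n} \<inter> R = \<omega> ` ({..<n} \<inter> \<omega> -` R)" by auto
  then have c1: "card (\<omega> ` {..<n} \<inter> R) \<le> card ({..<n} \<inter> \<omega> -` R)"
    using card_image_le[of "{..<n} \<inter> \<omega> -` R" \<omega>] by simp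
  have "(\<Sum>i<n. indicator R (\<omega> i) :: ennreal) = (\<Sum>i<n. of_bool (i \<in> \<omega> -` R))" by (simp add: indicator_def)
  also have "\<dots> = of_nat (card ({..<n} \<inter> {i. i \<in> \<omega> -` R}))" by (rule sum_of_bool_eq) simp_all
  also have "{..<n} \<inter> {i. i \<in> \<omega> -` R} = {..<n} \<inter> \<omega> -` R" by auto
  finally have c2: "(\<Sum>i<n. indicator R (\<omega> i) :: ennreal) = of_nat (card ({..<n} \<inter> \<omega> -` R))" .
  have "ennreal (real (card (\<omega> ` {..<n} \<inter> R))) = of_nat (card (\<omega> ` {..<n} \<inter> R))"
    by (simp add: ennreal_of_nat_eq_real_of_nat)
  also have "\<dots> \<le> of_nat (card ({..<n} \<inter> \<omega> -` R))" using c1 by simp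
  finally show ?thesis using c2 by simp
qed

lemma meas_ind:
  fixes R :: "'a::euclidean_space set"
  assumes R: "R \<in> sets borel"
  shows "(\<lambda>\<omega>. \<Sum>i<n. indicator R (\<omega> i) :: ennreal) \<in> borel_measurable (unit_cube_sample n :: (nat \<Rightarrow> 'a) measure)"
proof -
  let ?M = "uniform_measure lborel (cbox 0 (One :: 'a))"
  let ?P = "unit_cube_sample n :: (nat \<Rightarrow> 'a) measure"
  have P: "?P = PiM {..<n} (\<lambda>_. ?M)" by (simp add: unit_cube_sample_def)
  have meas: "(\<lambda>\<omega>. indicator R (\<omega> i) :: ennreal) \<in> borel_measurable ?P" if "i < n" for i
  proof -
    have "(\<lambda>\<omega>. \<omega> i) \<in> measurable ?P ?M" unfolding P using that
      by (intro measurable_component_singleton) auto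
    moreover have "indicator R \<in> borel_measurable ?M" using R by simp
    ultimately show ?thesis by (rule measurable_compose)
  qed
  then show ?thesis by (intro borel_measurable_sum) auto
qed

lemma int_ind:
  fixes R :: "'a::euclidean_space set"
  assumes R: "R \<in> sets borel"
  shows "(\<integral>\<^sup>+ \<omega>. (\<Sum>i<n. indicator R (\<omega> i)) \<partial>(unit_cube_sample n :: (nat \<Rightarrow> 'a) measure))
           \<le> of_nat n * emeasure lborel R"
proof -
  let ?M = "uniform_measure lborel (cbox 0 (One :: 'a))"
  let ?P = "unit_cube_sample n :: (nat \<Rightarrow> 'a) measure"
  have P: "?P = PiM {..<n} (\<lambda>_. ?M)" by (simp add: unit_cube_sample_def)
  have meas: "(\<lambda>\<omega>. indicator R (\<omega> i) :: ennreal) \<in> borel_measurable ?P" if "i < n" for i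
  proof -
    have "(\<lambda>\<omega>. \<omega> i) \<in> measurable ?P ?M" unfolding P using that
      by (intro measurable_component_singleton) auto
    moreover have "indicator R \<in> borel_measurable ?M" using R by simp
    ultimately show ?thesis by (rule measurable_compose)
  qed
  have comp: "(\<integral>\<^sup>+ \<omega>. indicator R (\<omega> i) \<partial>?P) = emeasure ?M R" if "i < n" for i
  proof -
    have T: "(\<lambda>\<omega>. \<omega> i) \<in> measurable ?P ?M" unfolding P using that
      by (intro measurable_component_singleton) auto
    have "distr ?P ?M (\<lambda>\<omega>. \<omega> i) = ?M" unfolding P using that prob_cube
      by (intro distr_PiM_component) auto
    then have "(\<integral>\<^sup>+ \<omega>. indicator R (\<omega> i) \<partial>?P) = (\<integral>\<^sup>+ x. indicator R x \<partial>?M)"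
      using nn_integral_distr[OF T, of "indicator R"] R by simp
    also have "\<dots> = emeasure ?M R" using R by simp
    finally show ?thesis .
  qed
  have "emeasure ?M R = emeasure lborel (cbox 0 One \<inter> R) / emeasure lborel (cbox 0 (One :: 'a))"
    using R by (intro emeasure_uniform_measure) auto
  also have "\<dots> = emeasure lborel (cbox 0 One \<inter> R)" by (simp add: cube_measure divide_ennreal_def)
  also have "\<dots> \<le> emeasure lborel R" using R by (intro emeasure_mono) auto
  finally have MR: "emeasure ?M R \<le> emeasure lborel R" .
  have "(\<integral>\<^sup>+ \<omega>. (\<Sum>i<n. indicator R (\<omega> i)) \<partial>?P) = (\<Sum>i<n. \<integral>\<^sup>+ \<omega>. indicator R (\<omega> i) \<partial>?P)"
    using meas by (intro nn_integral_sum) auto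
  also have "\<dots> = (\<Sum>i<n. emeasure ?M R)" using comp by simp
  also have "\<dots> = of_nat n * emeasure ?M R" by simp
  also have "\<dots> \<le> of_nat n * emeasure lborel R" using MR by (intro mult_left_mono) auto
  finally show ?thesis .
qed

locale cbody =
  fixes C :: "'a::euclidean_space set" and c0 :: 'a and r R :: real
  assumes convC: "convex C" and compC: "compact C" and ballC: "cball c0 r \<subseteq> C"
    and rpos: "r > 0" and Cbnd: "C \<subseteq> cball 0 R"
begin

definition "R' = R + 1"
definition mm :: "real \<Rightarrow> nat" where "mm \<delta> = nat \<lceil>2 * R' * DIM('a) / \<delta>\<rceil>"
definition ss :: "real \<Rightarrow> real" where "ss \<delta> = 2 * R' / real (mm \<delta>)"
definition netpt :: "real \<Rightarrow> 'a \<times> real \<times> ('a \<Rightarrow> nat) \<Rightarrow> 'a" where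
  "netpt \<delta> = (\<lambda>(b, \<sigma>, g). (\<sigma> * R') *\<^sub>R b + (\<Sum>b'\<in>Basis - {b}. (- R' + real (g b') * ss \<delta>) *\<^sub>R b'))"
definition Idx :: "real \<Rightarrow> ('a \<times> real \<times> ('a \<Rightarrow> nat)) set" where
  "Idx \<delta> = Sigma Basis (\<lambda>b. {-1, 1} \<times> PiE (Basis - {b}) (\<lambda>_. {0..mm \<delta>}))"
definition N :: "real \<Rightarrow> 'a set" where "N \<delta> = netpt \<delta> ` Idx \<delta>"

lemma c0C: "c0 \<in> C" using ballC rpos by auto
lemma Cne: "C \<noteq> {}" using c0C by auto
lemma closedC: "closed C" using compC compact_imp_closed by blast
lemma Rnn: "R \<ge> 0"
proof -
  have "c0 \<in> cball 0 R" using c0C Cbnd by blast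
  then have "norm c0 \<le> R" by (simp add: dist_norm)
  then show ?thesis using norm_ge_zero[of c0] by linarith
qed
lemma R'pos: "R' \<ge> 1" using Rnn by (simp add: R'_def)
lemma normC: "y \<in> C \<Longrightarrow> norm y \<le> R" using Cbnd by (auto simp: dist_norm)

lemma finite_Idx: "finite (Idx \<delta>)"
  unfolding Idx_def by (intro finite_SigmaI finite_cartesian_product finite_PiE) auto

lemma card_Idx: "card (Idx \<delta>) = DIM('a) * (2 * (mm \<delta> + 1) ^ (DIM('a) - 1))"
  unfolding Idx_def by (simp add: card_cartesian_product card_PiE card_Diff_singleton finite_PiE)

lemma finite_N: "finite (N \<delta>)" unfolding N_def using finite_Idx by simp

lemma card_N: "card (N \<delta>) \<le> DIM('a) * (2 * (mm \<delta> + 1) ^ (DIM('a) - 1))"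
  unfolding N_def using card_image_le[OF finite_Idx] card_Idx by metis

lemma netpt_coord:
  assumes "(b, \<sigma>, g) \<in> Idx \<delta>" "b' \<in> Basis"
  shows "netpt \<delta> (b, \<sigma>, g) \<bullet> b' = (if b' = b then \<sigma> * R' else - R' + real (g b') * ss \<delta>)"
proof -
  have b: "b \<in> Basis" using assms by (simp add: Idx_def)
  have "netpt \<delta> (b, \<sigma>, g) \<bullet> b' = (\<sigma> * R') * (b \<bullet> b') + (\<Sum>x\<in>Basis - {b}. (- R' + real (g x) * ss \<delta>) * (x \<bullet> b'))"
    by (simp add: netpt_def inner_add_left inner_sum_left)
  also have "\<dots> = (if b' = b then \<sigma> * R' else - R' + real (g b') * ss \<delta>)"
    using assms b by (auto simp: inner_Basis if_distrib[of "\<lambda>x. _ * x"] sum.delta cong: if_cong)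
  finally show ?thesis .
qed

lemma N_far: assumes "u \<in> N \<delta>" shows "R' \<le> norm u"
proof -
  obtain b \<sigma> g where i: "(b, \<sigma>, g) \<in> Idx \<delta>" and u: "u = netpt \<delta> (b, \<sigma>, g)"
    using assms unfolding N_def by auto
  have b: "b \<in> Basis" and s: "\<sigma> = -1 \<or> \<sigma> = 1" using i by (auto simp: Idx_def)
  have "u \<bullet> b = \<sigma> * R'" using netpt_coord[OF i b] u by simp
  then have "\<bar>u \<bullet> b\<bar> = R'" using s R'pos by auto
  then show ?thesis using Basis_le_norm[OF b, of u] by simp
qed

lemma mm_pos: "\<delta> > 0 \<Longrightarrow> mm \<delta> > 0"
  using R'pos by (simp add: mm_def DIM_positive)

lemma ss_le: assumes "\<delta> > 0" shows "ss \<delta> * DIM('a) \<le> \<delta>" "ss \<delta> > 0"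
proof -
  have m: "real (mm \<delta>) \<ge> 2 * R' * DIM('a) / \<delta>"
    unfolding mm_def by (simp add: real_nat_ceiling_ge)
  have p: "2 * R' * DIM('a) / \<delta> > 0" using assms R'pos by (simp add: DIM_positive)
  show "ss \<delta> > 0" using mm_pos[OF assms] R'pos by (simp add: ss_def)
  have "ss \<delta> * DIM('a) = 2 * R' * DIM('a) / real (mm \<delta>)" by (simp add: ss_def)
  also have "\<dots> \<le> 2 * R' * DIM('a) / (2 * R' * DIM('a) / \<delta>)"
  proof (rule divide_left_mono[OF m])
    show "0 \<le> 2 * R' * DIM('a)" using R'pos by simp
    show "0 < real (mm \<delta>) * (2 * R' * real DIM('a) / \<delta>)"
      using mult_pos_pos[OF _ p, of "real (mm \<delta>)"] mm_pos[OF assms] by simp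
  qed
  also have "\<dots> = \<delta>" using assms R'pos by (simp add: DIM_positive)
  finally show "ss \<delta> * DIM('a) \<le> \<delta>" .
qed

lemma N_cover:
  assumes "\<delta> > 0" "infnorm y = R'"
  shows "\<exists>u\<in>N \<delta>. norm (u - y) \<le> \<delta>"
proof -
  let ?m = "mm \<delta>" and ?s = "ss \<delta>"
  have sm: "?s * real ?m = 2 * R'" using mm_pos[OF assms(1)] by (simp add: ss_def)
  have sp: "?s > 0" using ss_le[OF assms(1)] by simp
  obtain b where b: "b \<in> Basis" "\<bar>y \<bullet> b\<bar> = infnorm y"
  proof -
    have "Max ((\<lambda>i. \<bar>y \<bullet> i\<bar>) ` Basis) \<in> (\<lambda>i. \<bar>y \<bullet> i\<bar>) ` Basis"
      by (rule Max_in) auto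
    then obtain i where "i \<in> Basis" "Max ((\<lambda>i. \<bar>y \<bullet> i\<bar>) ` Basis) = \<bar>y \<bullet> i\<bar>" by blast
    then show ?thesis using that[of i] by (simp add: infnorm_Max)
  qed
  have yb: "\<bar>y \<bullet> b'\<bar> \<le> R'" if "b' \<in> Basis" for b'
    using Basis_le_infnorm[OF that, of y] assms by simp
  define \<sigma> :: real where "\<sigma> = (if y \<bullet> b \<ge> 0 then 1 else -1)"
  define k where "k b' = \<lfloor>(y \<bullet> b' + R') / ?s\<rfloor>" for b'
  define g where "g = restrict (\<lambda>b'. nat (k b')) (Basis - {b})"
  have kb: "0 \<le> k b' \<and> k b' \<le> int ?m" if "b' \<in> Basis" for b'
  proof -
    have "0 \<le> (y \<bullet> b' + R') / ?s" using yb[OF that] sp by auto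
    moreover have "(y \<bullet> b' + R') / ?s \<le> real ?m"
    proof -
      have "y \<bullet> b' \<le> R'" using yb[OF that] by (simp add: abs_le_iff)
      moreover have "real ?m * ?s = 2 * R'" using sm by (simp add: mult.commute)
      ultimately have "y \<bullet> b' + R' \<le> real ?m * ?s" by linarith
      then show ?thesis by (simp add: pos_divide_le_eq[OF sp])
    qed
    ultimately show ?thesis unfolding k_def by (simp add: floor_le_iff)
  qed
  have idx: "(b, \<sigma>, g) \<in> Idx \<delta>"
    unfolding Idx_def g_def \<sigma>_def using b kb by (auto simp: PiE_iff nat_le_iff)
  define u where "u = netpt \<delta> (b, \<sigma>, g)"
  have coord: "\<bar>(u - y) \<bullet> b'\<bar> \<le> ?s" if "b' \<in> Basis" for b'
  proof (cases "b' = b")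
    case True
    then show ?thesis using netpt_coord[OF idx that] b assms sp
      by (auto simp: u_def \<sigma>_def inner_diff_left)
  next
    case False
    have gk: "real (g b') = real_of_int (k b')"
      using False that kb by (simp add: g_def)
    have fl1: "real_of_int (k b') \<le> (y \<bullet> b' + R') / ?s" unfolding k_def by simp
    have fl2: "(y \<bullet> b' + R') / ?s < real_of_int (k b') + 1" unfolding k_def by linarith
    have "real_of_int (k b') * ?s \<le> y \<bullet> b' + R'" using fl1 sp by (simp add: le_divide_eq)
    moreover have "y \<bullet> b' + R' < (real_of_int (k b') + 1) * ?s" using fl2 sp by (simp add: divide_less_eq)
    ultimately show ?thesis using netpt_coord[OF idx that] False gk
      by (auto simp: u_def inner_diff_left algebra_simps)
  qed
  have "norm (u - y) \<le> (\<Sum>b'\<in>Basis. \<bar>(u - y) \<bullet> b'\<bar>)" by (rule norm_le_l1)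
  also have "\<dots> \<le> (\<Sum>b'\<in>(Basis::'a set). ?s)" using coord by (intro sum_mono) auto
  also have "\<dots> = ?s * DIM('a)" by simp
  also have "\<dots> \<le> \<delta>" using ss_le[OF assms(1)] by simp
  finally show ?thesis using idx unfolding N_def u_def by blast
qed

lemma ray_hit:
  assumes "q \<in> C" "norm v = 1"
  shows "\<exists>t\<ge>1. infnorm (q + t *\<^sub>R v) = R'"
proof -
  define f where "f t = infnorm (q + t *\<^sub>R v)" for t
  define T where "T = sqrt DIM('a) * R' + R"
  have nq: "norm q \<le> R" using normC assms by simp
  have f0: "f 0 \<le> R'" using infnorm_le_norm[of q] nq by (simp add: f_def R'_def)
  have T0: "0 \<le> T" using Rnn R'pos by (simp add: T_def)
  have "sqrt DIM('a) * R' = T - R" by (simp add: T_def)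
  also have "\<dots> \<le> norm (q + T *\<^sub>R v)"
    using norm_diff_ineq[of "T *\<^sub>R v" q] nq T0 assms(2) by (simp add: add.commute)
  also have "\<dots> \<le> sqrt DIM('a) * f T" unfolding f_def by (rule norm_le_infnorm)
  finally have fT: "R' \<le> f T" using DIM_positive by (simp add: mult_le_cancel_left_pos)
  have cont: "continuous_on {0..T} f" unfolding f_def by (intro continuous_intros)
  obtain t where t: "0 \<le> t" "t \<le> T" "f t = R'" using IVT'[of f 0 R' T, OF f0 fT T0 cont] by blast
  have "R' \<le> norm (q + t *\<^sub>R v)" using t infnorm_le_norm unfolding f_def by metis
  also have "\<dots> \<le> norm q + t" using norm_triangle_ineq[of q "t *\<^sub>R v"] t assms(2) by simp
  finally have "1 \<le> t" using nq by (simp add: R'_def)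
  then show ?thesis using t unfolding f_def by blast
qed

end

context cbody begin

abbreviation p :: "'a \<Rightarrow> 'a" where "p \<equiv> closest_point C"

lemma pC: "p x \<in> C" using closest_point_in_set[OF closedC Cne] .

lemma core:
  assumes d: "0 < \<delta>" "\<delta> \<le> 1/4" and q: "q \<in> C" and v: "norm v = 1"
    and sup: "\<forall>y\<in>C. v \<bullet> (y - q) \<le> 0"
  shows "\<exists>u\<in>N \<delta>. v \<bullet> (q - p u) \<le> 2 * \<delta>\<^sup>2 \<and>
           (\<forall>h\<ge>0. (u - p u) \<bullet> (q + h *\<^sub>R v - p u) \<le> 0 \<longrightarrow> h \<le> 4 * \<delta>\<^sup>2)"
proof -
  obtain t where t: "t \<ge> 1" "infnorm (q + t *\<^sub>R v) = R'" using ray_hit[OF q v] by blast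
  define us where "us = q + t *\<^sub>R v"
  obtain u where u: "u \<in> N \<delta>" "norm (u - us) \<le> \<delta>" using N_cover[OF d(1) t(2)] unfolding us_def by blast
  define w where "w = q - p u"
  define a where "a = u - p u"
  define e where "e = a - t *\<^sub>R v"
  have vv: "v \<bullet> v = 1" using v by (simp add: dot_square_norm)
  have D1: "a \<bullet> w \<le> 0" unfolding a_def w_def using closest_point_dot[OF convC closedC q] .
  have D2: "v \<bullet> w \<ge> 0" using sup pC[of u] unfolding w_def
    by (metis inner_diff_right inner_minus_right minus_diff_eq neg_0_le_iff_le)
  have ew: "e = (u - us) + w" by (simp add: e_def a_def us_def w_def algebra_simps)
  have "w \<bullet> w \<le> - ((u - us) \<bullet> w)"
  proof -
    have "a \<bullet> w = (u - us) \<bullet> w + w \<bullet> w + t * (v \<bullet> w)"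
      by (simp add: a_def us_def w_def algebra_simps inner_diff_left inner_add_left)
    moreover have "t * (v \<bullet> w) \<ge> 0" using t D2 by simp
    ultimately show ?thesis using D1 by linarith
  qed
  also have "\<dots> \<le> norm (u - us) * norm w"
    using Cauchy_Schwarz_ineq2[of "u - us" w] by linarith
  finally have "norm w * norm w \<le> norm (u - us) * norm w" by (simp add: dot_square_norm power2_eq_square)
  then have nw: "norm w \<le> \<delta>" using u(2)
    by (metis mult_le_cancel_right norm_ge_zero order_trans le_less)
  have ne: "norm e \<le> 2 * \<delta>" using ew norm_triangle_ineq[of "u - us" w] nw u(2) by simp
  have ewb: "\<bar>e \<bullet> w\<bar> \<le> 2 * \<delta>\<^sup>2"
  proof -
    have "\<bar>e \<bullet> w\<bar> \<le> norm e * norm w" by (rule Cauchy_Schwarz_ineq2)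
    also have "\<dots> \<le> (2 * \<delta>) * \<delta>" using ne nw d by (intro mult_mono) auto
    finally show ?thesis by (simp add: power2_eq_square)
  qed
  have evb: "\<bar>e \<bullet> v\<bar> \<le> 2 * \<delta>"
    using Cauchy_Schwarz_ineq2[of e v] ne v by simp
  have aw: "a \<bullet> w = t * (v \<bullet> w) + e \<bullet> w" by (simp add: e_def inner_diff_left)
  have av: "a \<bullet> v = t + e \<bullet> v" using vv by (simp add: e_def inner_diff_left)
  have i: "v \<bullet> (q - p u) \<le> 2 * \<delta>\<^sup>2"
  proof -
    have "t * (v \<bullet> w) \<le> 2 * \<delta>\<^sup>2" using aw D1 ewb by linarith
    moreover have "v \<bullet> w \<le> t * (v \<bullet> w)" using t D2 by (simp add: mult_le_cancel_right1)
    ultimately show ?thesis unfolding w_def by linarith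
  qed
  have ii: "h \<le> 4 * \<delta>\<^sup>2" if h: "h \<ge> 0" "(u - p u) \<bullet> (q + h *\<^sub>R v - p u) \<le> 0" for h
  proof -
    have eq: "(u - p u) \<bullet> (q + h *\<^sub>R v - p u) = h * (a \<bullet> v) + a \<bullet> w"
      by (simp add: a_def w_def algebra_simps inner_diff_right inner_add_right)
    have "a \<bullet> v \<ge> 1/2" using av evb t d by linarith
    then have "h * (1/2) \<le> h * (a \<bullet> v)" using h(1) by (rule mult_left_mono)
    then have "h * (a \<bullet> v) \<ge> h / 2" by simp
    moreover have "a \<bullet> w \<ge> - 2 * \<delta>\<^sup>2"
    proof -
      have "t * (v \<bullet> w) \<ge> 0" using t D2 by simp
      moreover have "e \<bullet> w \<ge> - (2 * \<delta>\<^sup>2)" using ewb by (simp add: abs_le_iff)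
      ultimately show ?thesis using aw by linarith
    qed
    ultimately show ?thesis using h(2) eq by linarith
  qed
  show ?thesis using u(1) i ii by blast
qed

definition Qin :: "real \<Rightarrow> 'a set" where "Qin \<delta> = convex hull (p ` N \<delta>)"
definition HS :: "'a \<Rightarrow> 'a set" where "HS u = {x. (u - p u) \<bullet> x \<le> (u - p u) \<bullet> p u}"
definition boxHS :: "'a set set" where
  "boxHS = (\<lambda>b. {x. b \<bullet> x \<le> R'}) ` Basis \<union> (\<lambda>b. {x. (- b) \<bullet> x \<le> R'}) ` Basis"
definition Qout :: "real \<Rightarrow> 'a set" where "Qout \<delta> = \<Inter>(boxHS \<union> HS ` N \<delta>)"

lemma Qin_sub: "Qin \<delta> \<subseteq> C"
  unfolding Qin_def using pC convC by (intro hull_minimal) auto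

lemma N_ne: "N \<delta> \<noteq> {}"
proof -
  obtain b :: 'a where b: "b \<in> Basis" using nonempty_Basis by blast
  define g :: "'a \<Rightarrow> nat" where "g = restrict (\<lambda>_. 0) (Basis - {b})"
  have "(b, 1, g) \<in> Idx \<delta>" using b by (auto simp: Idx_def g_def)
  then show ?thesis by (auto simp: N_def)
qed

lemma Qin_props: "compact (Qin \<delta>)" "convex (Qin \<delta>)" "Qin \<delta> \<noteq> {}"
  unfolding Qin_def using finite_N N_ne
  by (auto intro: finite_imp_compact_convex_hull)

lemma inner_support:
  assumes d: "0 < \<delta>" "\<delta> \<le> 1/4" and v: "norm v = 1"
  shows "\<exists>z\<in>Qin \<delta>. \<forall>y\<in>C. v \<bullet> y \<le> v \<bullet> z + 2 * \<delta>\<^sup>2"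
proof -
  obtain q where q: "q \<in> C" "\<forall>y\<in>C. v \<bullet> y \<le> v \<bullet> q"
  proof -
    have "continuous_on C ((\<bullet>) v)" by (intro continuous_intros)
    then show ?thesis using continuous_attains_sup[OF compC Cne, of "\<lambda>y. v \<bullet> y"] that by blast
  qed
  have "\<forall>y\<in>C. v \<bullet> (y - q) \<le> 0" using q by (simp add: inner_diff_right)
  then obtain u where u: "u \<in> N \<delta>" "v \<bullet> (q - p u) \<le> 2 * \<delta>\<^sup>2" using core[OF d q(1) v] by blast
  have "p u \<in> Qin \<delta>" unfolding Qin_def using u(1) by (intro hull_inc) auto
  moreover have "\<forall>y\<in>C. v \<bullet> y \<le> v \<bullet> p u + 2 * \<delta>\<^sup>2"
    using q u(2) by (auto simp: inner_diff_right)
  ultimately show ?thesis by blast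
qed

lemma sep_lemma:
  fixes S :: "'a set"
  assumes "compact S" "convex S" "S \<noteq> {}" "y \<notin> S"
  obtains z v where "z \<in> S" "norm v = 1" "v \<bullet> y - v \<bullet> z = norm (y - z)" "\<forall>z'\<in>S. v \<bullet> z' \<le> v \<bullet> z"
proof -
  have cl: "closed S" using assms compact_imp_closed by blast
  define z where "z = closest_point S y"
  have zS: "z \<in> S" unfolding z_def using closest_point_in_set[OF cl assms(3)] .
  have yz: "y \<noteq> z" using zS assms(4) by blast
  define v where "v = (1 / norm (y - z)) *\<^sub>R (y - z)"
  have nv: "norm v = 1" using yz by (simp add: v_def)
  have "v \<bullet> y - v \<bullet> z = (1 / norm (y - z)) * ((y - z) \<bullet> (y - z))"
    by (simp add: v_def inner_diff_right diff_divide_distrib)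
  also have "\<dots> = norm (y - z)" using yz by (simp add: dot_square_norm power2_eq_square)
  finally have e: "v \<bullet> y - v \<bullet> z = norm (y - z)" .
  have "v \<bullet> z' \<le> v \<bullet> z" if "z' \<in> S" for z'
  proof -
    have "(y - z) \<bullet> (z' - z) \<le> 0" unfolding z_def using closest_point_dot[OF assms(2) cl that] .
    then have "(1 / norm (y - z)) * ((y - z) \<bullet> (z' - z)) \<le> 0"
      by (simp add: divide_nonpos_nonneg)
    then show ?thesis by (simp add: v_def inner_diff_right diff_divide_distrib)
  qed
  then show ?thesis using that zS nv e by blast
qed

lemma C_near_Qin:
  assumes d: "0 < \<delta>" "\<delta> \<le> 1/4" and y: "y \<in> C"
  shows "\<exists>z\<in>Qin \<delta>. norm (y - z) \<le> 2 * \<delta>\<^sup>2"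
proof (cases "y \<in> Qin \<delta>")
  case True then show ?thesis by force
next
  case False
  obtain z v where z: "z \<in> Qin \<delta>" "norm v = 1" "v \<bullet> y - v \<bullet> z = norm (y - z)"
      "\<forall>z'\<in>Qin \<delta>. v \<bullet> z' \<le> v \<bullet> z"
    using sep_lemma[OF Qin_props False] by blast
  obtain z' where z': "z' \<in> Qin \<delta>" "\<forall>y\<in>C. v \<bullet> y \<le> v \<bullet> z' + 2 * \<delta>\<^sup>2"
    using inner_support[OF d z(2)] by blast
  have "v \<bullet> z' \<le> v \<bullet> z" using z(4) z'(1) by blast
  moreover have "v \<bullet> y \<le> v \<bullet> z' + 2 * \<delta>\<^sup>2" using z'(2) y by blast
  ultimately have "norm (y - z) \<le> 2 * \<delta>\<^sup>2" using z(3) by linarith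
  then show ?thesis using z(1) by blast
qed

lemma ball_Qin:
  assumes d: "0 < \<delta>" "\<delta> \<le> 1/4" and small: "4 * \<delta>\<^sup>2 < r"
  shows "cball c0 (r / 2) \<subseteq> Qin \<delta>"
proof
  fix y assume y: "y \<in> cball c0 (r / 2)"
  show "y \<in> Qin \<delta>"
  proof (rule ccontr)
    assume nin: "y \<notin> Qin \<delta>"
    obtain z v where z: "z \<in> Qin \<delta>" "norm v = 1" "v \<bullet> y - v \<bullet> z = norm (y - z)"
        "\<forall>z'\<in>Qin \<delta>. v \<bullet> z' \<le> v \<bullet> z"
      using sep_lemma[OF Qin_props nin] by blast
    define y' where "y' = y + (r / 2) *\<^sub>R v"
    have "dist c0 y' \<le> dist c0 y + r / 2"
      unfolding y'_def using z(2) rpos dist_triangle[of c0 "y + (r/2) *\<^sub>R v" y]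
      by (simp add: dist_norm)
    then have "y' \<in> C" using y ballC by (auto simp: subset_iff)
    then obtain z' where z': "z' \<in> Qin \<delta>" "v \<bullet> y' \<le> v \<bullet> z' + 2 * \<delta>\<^sup>2"
      using inner_support[OF d z(2)] by blast
    have vy': "v \<bullet> y' = v \<bullet> y + r / 2"
      using z(2) by (simp add: y'_def inner_add_right dot_square_norm)
    have "norm (y - z) > 0" using z(1) nin by auto
    moreover have "v \<bullet> z' \<le> v \<bullet> z" using z(4) z'(1) by blast
    ultimately show False using z(3) z'(2) vy' small by linarith
  qed
qed

lemma C_sub_Qout: "C \<subseteq> Qout \<delta>"
proof
  fix y assume y: "y \<in> C"
  have ny: "norm y \<le> R" using normC[OF y] .
  have "y \<in> h" if "h \<in> boxHS" for h
  proof -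
    obtain b where b: "b \<in> Basis" "h = {x. b \<bullet> x \<le> R'} \<or> h = {x. (- b) \<bullet> x \<le> R'}"
      using \<open>h \<in> boxHS\<close> unfolding boxHS_def by blast
    have "\<bar>y \<bullet> b\<bar> \<le> R'" using Basis_le_norm[OF b(1), of y] ny by (simp add: R'_def)
    then show ?thesis using b(2) by (auto simp: inner_commute)
  qed
  moreover have "y \<in> HS u" for u
    using closest_point_dot[OF convC closedC y, of u] by (simp add: HS_def inner_diff_right)
  ultimately show "y \<in> Qout \<delta>" by (auto simp: Qout_def)
qed

lemma Qout_near:
  assumes d: "0 < \<delta>" "\<delta> \<le> 1/4" and x: "x \<in> Qout \<delta>"
  shows "\<exists>y\<in>C. norm (x - y) \<le> 4 * \<delta>\<^sup>2"
proof (cases "x \<in> C")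
  case True then show ?thesis by force
next
  case False
  define q where "q = p x"
  have qC: "q \<in> C" by (simp add: q_def pC)
  define h where "h = norm (x - q)"
  have hpos: "h > 0" using False qC by (auto simp: h_def)
  define v where "v = (1 / h) *\<^sub>R (x - q)"
  have v: "norm v = 1" using hpos by (simp add: v_def h_def)
  have xq: "x = q + h *\<^sub>R v" using hpos by (simp add: v_def)
  have sup: "\<forall>y\<in>C. v \<bullet> (y - q) \<le> 0"
  proof
    fix y assume "y \<in> C"
    have "(x - q) \<bullet> (y - q) \<le> 0" unfolding q_def using closest_point_dot[OF convC closedC \<open>y \<in> C\<close>] .
    then show "v \<bullet> (y - q) \<le> 0" using hpos by (simp add: v_def divide_nonpos_pos)
  qed
  obtain u where u: "u \<in> N \<delta>" "\<forall>h\<ge>0. (u - p u) \<bullet> (q + h *\<^sub>R v - p u) \<le> 0 \<longrightarrow> h \<le> 4 * \<delta>\<^sup>2"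
    using core[OF d qC v sup] by blast
  have "x \<in> HS u" using x u(1) by (auto simp: Qout_def)
  then have "(u - p u) \<bullet> (x - p u) \<le> 0" by (simp add: HS_def inner_diff_right)
  then have "h \<le> 4 * \<delta>\<^sup>2" using u(2) hpos xq by auto
  then show ?thesis using qC by (auto simp: h_def)
qed

end

context cbody begin

definition good :: "real \<Rightarrow> bool" where "good \<delta> \<longleftrightarrow> 0 < \<delta> \<and> \<delta> \<le> 1/4 \<and> 8 * \<delta>\<^sup>2 \<le> r"

lemma boxHS_bounded: "bounded (\<Inter>boxHS)"
proof -
  have "\<Inter>boxHS \<subseteq> cball 0 (DIM('a) * R')"
  proof
    fix x assume x: "x \<in> \<Inter>boxHS"
    have c: "\<bar>x \<bullet> b\<bar> \<le> R'" if b: "b \<in> Basis" for b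
    proof -
      have "x \<in> {x. b \<bullet> x \<le> R'}" "x \<in> {x. (- b) \<bullet> x \<le> R'}" using x b by (auto simp: boxHS_def)
      then show ?thesis by (auto simp: inner_commute)
    qed
    have "norm x \<le> (\<Sum>b\<in>Basis. \<bar>x \<bullet> b\<bar>)" by (rule norm_le_l1)
    also have "\<dots> \<le> (\<Sum>b\<in>(Basis::'a set). R')" using c by (intro sum_mono) auto
    finally show "x \<in> cball 0 (DIM('a) * R')" by (simp add: dist_norm mult.commute)
  qed
  then show ?thesis using bounded_cball bounded_subset by blast
qed

lemma Qout_compact: "compact (Qout \<delta>)"
proof -
  have h1: "closed {x. (- b) \<bullet> x \<le> R'}" for b :: 'a by (rule closed_halfspace_le)
  have "closed h" if "h \<in> boxHS \<union> HS ` N \<delta>" for h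
    using that unfolding boxHS_def HS_def
    by (elim UnE imageE) (simp_all only: closed_halfspace_le h1)
  then have "closed (Qout \<delta>)" unfolding Qout_def by (intro closed_Inter) blast
  moreover have "bounded (Qout \<delta>)" using boxHS_bounded
    by (rule bounded_subset) (auto simp: Qout_def)
  ultimately show ?thesis using compact_eq_bounded_closed by blast
qed

lemma measure_scale:
  fixes S :: "'a set"
  assumes "compact S" "l \<ge> 0"
  shows "measure lborel ((\<lambda>x. l *\<^sub>R x + t) ` S) = l ^ DIM('a) * measure lborel S"
proof -
  have c: "compact ((\<lambda>x. l *\<^sub>R x + t) ` S)"
    using assms(1) by (intro compact_continuous_image continuous_intros)
  have "measure lborel ((\<lambda>x. l *\<^sub>R x + t) ` S) = measure lebesgue ((\<lambda>x. l *\<^sub>R x + t) ` S)"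
    using c by (simp add: borel_compact)
  also have "\<dots> = \<bar>l\<bar> ^ DIM('a) * measure lebesgue S" by (rule measure_lebesgue_affine)
  also have "\<dots> = l ^ DIM('a) * measure lborel S" using assms by (simp add: borel_compact)
  finally show ?thesis .
qed

lemma vol_bounds:
  assumes g: "good \<delta>"
  shows "measure lborel (C - Qin \<delta>) \<le> (2 ^ DIM('a) - 1) * (8 / r) * measure lborel C * \<delta>\<^sup>2"
    and "measure lborel (Qout \<delta> - C) \<le> (2 ^ DIM('a) - 1) * (8 / r) * measure lborel C * \<delta>\<^sup>2"
proof -
  have d: "0 < \<delta>" "\<delta> \<le> 1/4" and sm: "8 * \<delta>\<^sup>2 \<le> r" using g by (auto simp: good_def)
  define \<eta> where "\<eta> = 4 * \<delta>\<^sup>2"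
  have eta: "\<eta> > 0" using d by (simp add: \<eta>_def)
  define l where "l = 1 + \<eta> / (r / 2)"
  have l1: "l \<ge> 1" using eta rpos by (simp add: l_def)
  have x01: "\<eta> / (r / 2) \<le> 1" using sm rpos by (simp add: \<eta>_def field_simps)
  have lpow: "l ^ DIM('a) - 1 \<le> (2 ^ DIM('a) - 1) * (8 / r) * \<delta>\<^sup>2"
  proof -
    have "l ^ DIM('a) - 1 \<le> (2 ^ DIM('a) - 1) * (\<eta> / (r / 2))"
      unfolding l_def using pow_minus_one_le[OF _ x01] eta rpos by simp
    also have "\<eta> / (r / 2) = (8 / r) * \<delta>\<^sup>2" by (simp add: \<eta>_def field_simps)
    finally show ?thesis by (simp only: mult.assoc)
  qed
  have "\<delta>\<^sup>2 > 0" using d by simp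
  then have sm2: "4 * \<delta>\<^sup>2 < r" using sm by linarith
  have bQ: "cball c0 (r / 2) \<subseteq> Qin \<delta>" using ball_Qin[OF d sm2] .
  have "cball c0 (r / 2) \<subseteq> cball c0 r" using rpos by (intro subset_cball) simp
  then have bC: "cball c0 (r / 2) \<subseteq> C" using ballC by blast
  have cimg: "compact ((\<lambda>x. l *\<^sub>R x + t) ` S)" if "compact S" for S :: "'a set" and t :: 'a
    using that by (intro compact_continuous_image) (auto intro!: continuous_intros)
  have mC: "C \<in> fmeasurable lborel" using compC by (rule fmeasurable_compact)
  have mQ: "Qin \<delta> \<in> fmeasurable lborel" using Qin_props(1) by (rule fmeasurable_compact)
  have mQo: "Qout \<delta> \<in> fmeasurable lborel" using Qout_compact by (rule fmeasurable_compact)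
  have r2: "r / 2 > 0" using rpos by simp
  have nearC: "\<exists>y\<in>Qin \<delta>. norm (x - y) \<le> \<eta>" if xC: "x \<in> C" for x
  proof -
    obtain z where "z \<in> Qin \<delta>" "norm (x - z) \<le> 2 * \<delta>\<^sup>2" using C_near_Qin[OF d xC] by blast
    moreover have "2 * \<delta>\<^sup>2 \<le> \<eta>" by (simp add: \<eta>_def)
    ultimately show ?thesis by force
  qed
  have "C \<subseteq> (\<lambda>x. l *\<^sub>R x + (c0 - l *\<^sub>R c0)) ` Qin \<delta>"
    unfolding l_def by (rule scale_cover[OF Qin_props(2) bQ r2 eta nearC])
  then have "measure lborel C \<le> measure lborel ((\<lambda>x. l *\<^sub>R x + (c0 - l *\<^sub>R c0)) ` Qin \<delta>)"
    using mC by (intro measure_mono_fmeasurable fmeasurable_compact[OF cimg[OF Qin_props(1)]]) auto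
  also have "\<dots> = l ^ DIM('a) * measure lborel (Qin \<delta>)" using l1 by (intro measure_scale Qin_props(1)) auto
  finally have i1: "measure lborel C \<le> l ^ DIM('a) * measure lborel (Qin \<delta>)" .
  have i2: "measure lborel (Qin \<delta>) \<le> measure lborel C"
    using Qin_sub mC mQ by (intro measure_mono_fmeasurable) auto
  have "measure lborel (C - Qin \<delta>) = measure lborel C - measure lborel (Qin \<delta>)"
    using mC mQ Qin_sub by (intro measure_Diff) (auto simp: fmeasurable_def)
  also have "\<dots> \<le> (l ^ DIM('a) - 1) * measure lborel (Qin \<delta>)" using i1 by (simp add: algebra_simps)
  also have "\<dots> \<le> (l ^ DIM('a) - 1) * measure lborel C"
    using i2 l1 by (intro mult_left_mono) (auto simp: one_le_power)
  also have "\<dots> \<le> (2 ^ DIM('a) - 1) * (8 / r) * \<delta>\<^sup>2 * measure lborel C"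
    using lpow by (intro mult_right_mono) auto
  finally show "measure lborel (C - Qin \<delta>) \<le> (2 ^ DIM('a) - 1) * (8 / r) * measure lborel C * \<delta>\<^sup>2"
    by (simp add: algebra_simps)
  have "Qout \<delta> \<subseteq> (\<lambda>x. l *\<^sub>R x + (c0 - l *\<^sub>R c0)) ` C"
    unfolding l_def using Qout_near[OF d] by (intro scale_cover[OF convC bC r2 eta]) (simp add: \<eta>_def)
  then have "measure lborel (Qout \<delta>) \<le> measure lborel ((\<lambda>x. l *\<^sub>R x + (c0 - l *\<^sub>R c0)) ` C)"
    using mQo by (intro measure_mono_fmeasurable fmeasurable_compact[OF cimg[OF compC]]) auto
  also have "\<dots> = l ^ DIM('a) * measure lborel C" using l1 by (intro measure_scale compC) auto
  finally have o1: "measure lborel (Qout \<delta>) \<le> l ^ DIM('a) * measure lborel C" .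
  have "measure lborel (Qout \<delta> - C) = measure lborel (Qout \<delta>) - measure lborel C"
    using mC mQo C_sub_Qout by (intro measure_Diff) (auto simp: fmeasurable_def)
  also have "\<dots> \<le> (l ^ DIM('a) - 1) * measure lborel C" using o1 by (simp add: algebra_simps)
  also have "\<dots> \<le> (2 ^ DIM('a) - 1) * (8 / r) * \<delta>\<^sup>2 * measure lborel C"
    using lpow by (intro mult_right_mono) auto
  finally show "measure lborel (Qout \<delta> - C) \<le> (2 ^ DIM('a) - 1) * (8 / r) * measure lborel C * \<delta>\<^sup>2"
    by (simp add: algebra_simps)
qed

end

context cbody begin

definition sepa :: "'a \<Rightarrow> 'a \<times> real" where
  "sepa y = (SOME ab. fst ab \<noteq> 0 \<and> fst ab \<bullet> y > snd ab \<and> (\<forall>x\<in>C. fst ab \<bullet> x \<le> snd ab))"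
definition Hp :: "'a \<Rightarrow> 'a set" where "Hp y = {x. fst (sepa y) \<bullet> x \<le> snd (sepa y)}"

lemma sepa:
  assumes "y \<notin> C"
  shows "fst (sepa y) \<noteq> 0" "y \<notin> Hp y" "C \<subseteq> Hp y"
proof -
  obtain a b where ab: "a \<bullet> y < b" "\<forall>x\<in>C. a \<bullet> x > b"
    using separating_hyperplane_closed_point[OF convC closedC assms] by blast
  have "-a \<noteq> 0" using ab c0C by force
  then have ex: "\<exists>ab. fst ab \<noteq> 0 \<and> fst ab \<bullet> y > snd ab \<and> (\<forall>x\<in>C. fst ab \<bullet> x \<le> snd ab)"
    using ab by (intro exI[of _ "(-a, -b)"]) (auto simp: less_imp_le)
  have "fst (sepa y) \<noteq> 0 \<and> fst (sepa y) \<bullet> y > snd (sepa y) \<and> (\<forall>x\<in>C. fst (sepa y) \<bullet> x \<le> snd (sepa y))"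
    unfolding sepa_def by (rule someI_ex[OF ex])
  then show "fst (sepa y) \<noteq> 0" "y \<notin> Hp y" "C \<subseteq> Hp y" by (auto simp: Hp_def)
qed

lemma interior_C: "interior C \<noteq> {}"
proof -
  have "ball c0 r \<subseteq> interior C" using ballC interior_mono interior_cball by metis
  then show ?thesis using rpos centre_in_ball by blast
qed

lemma card_boxHS: "card boxHS \<le> 2 * DIM('a)" and finite_boxHS: "finite boxHS"
proof -
  have "card boxHS \<le> card ((\<lambda>b. {x. b \<bullet> x \<le> R'}) ` (Basis::'a set)) + card ((\<lambda>b. {x. (- b) \<bullet> x \<le> R'}) ` (Basis::'a set))"
    unfolding boxHS_def by (rule card_Un_le)
  also have "\<dots> \<le> DIM('a) + DIM('a)" by (intro add_mono card_image_le) auto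
  finally show "card boxHS \<le> 2 * DIM('a)" by simp
  show "finite boxHS" unfolding boxHS_def by simp
qed

lemma outer_bound:
  assumes g: "good \<delta>" and P: "finite P"
  shows "outer_fence_facets P C \<le> 2 * DIM('a) + card (N \<delta>) + card (P \<inter> (Qout \<delta> - C))"
proof -
  define X where "X = P \<inter> (Qout \<delta> - C)"
  define Hs where "Hs = boxHS \<union> HS ` N \<delta> \<union> Hp ` X"
  define F where "F = \<Inter>Hs"
  have finX: "finite X" using P by (simp add: X_def)
  have finHs: "finite Hs" unfolding Hs_def using finX finite_N finite_boxHS by simp
  have hs: "\<forall>h\<in>Hs. \<exists>a b. a \<noteq> 0 \<and> h = {x. a \<bullet> x \<le> b}"
  proof
    fix h assume "h \<in> Hs"
    then consider (b1) b where "b \<in> Basis" "h = {x. b \<bullet> x \<le> R'}"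
      | (b2) b where "b \<in> Basis" "h = {x. (- b) \<bullet> x \<le> R'}"
      | (n) u where "u \<in> N \<delta>" "h = HS u"
      | (x) y where "y \<in> X" "h = Hp y"
      unfolding Hs_def boxHS_def by blast
    then show "\<exists>a b. a \<noteq> 0 \<and> h = {x. a \<bullet> x \<le> b}"
    proof cases
      case b1 then show ?thesis using nonzero_Basis by blast
    next
      case b2 then show ?thesis using nonzero_Basis by (metis neg_0_equal_iff_equal)
    next
      case n
      have "norm (p u) \<le> R" using normC pC by blast
      moreover have "R' \<le> norm u" using N_far n(1) .
      ultimately have "u - p u \<noteq> 0" by (auto simp: R'_def)
      then show ?thesis using n(2) unfolding HS_def by blast
    next
      case x
      then have "y \<notin> C" by (simp add: X_def)
      then show ?thesis using sepa(1) x(2) unfolding Hp_def by blast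
    qed
  qed
  have CF: "C \<subseteq> F"
  proof -
    have "C \<subseteq> Qout \<delta>" by (rule C_sub_Qout)
    moreover have "C \<subseteq> Hp y" if "y \<in> X" for y using that sepa(3) by (simp add: X_def)
    ultimately show ?thesis unfolding F_def Hs_def Qout_def by blast
  qed
  have FQ: "F \<subseteq> Qout \<delta>" unfolding F_def Hs_def Qout_def by blast
  have intF: "interior F \<noteq> {}" using interior_C interior_mono[OF CF] by blast
  have polyh: "polyhedron F" unfolding polyhedron_def F_def using finHs hs by blast
  have bnd: "bounded F" using boxHS_bounded by (rule bounded_subset) (auto simp: F_def Hs_def)
  have pt: "polytope F" using polyh bnd polytope_eq_bounded_polyhedron by blast
  have full: "full_polytope F" unfolding full_polytope_def
    using pt polytope_imp_closed polytope_imp_convex aff_dim_nonempty_interior[OF intF] by blast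
  have eqP: "C \<inter> P = F \<inter> P"
  proof
    show "C \<inter> P \<subseteq> F \<inter> P" using CF by blast
    show "F \<inter> P \<subseteq> C \<inter> P"
    proof
      fix y assume y: "y \<in> F \<inter> P"
      show "y \<in> C \<inter> P"
      proof (rule ccontr)
        assume "y \<notin> C \<inter> P"
        then have yC: "y \<notin> C" using y by blast
        then have "y \<in> X" using y FQ by (auto simp: X_def)
        then have "y \<in> Hp y" using y by (auto simp: F_def Hs_def)
        then show False using sepa(2)[OF yC] by blast
      qed
    qed
  qed
  have cand: "is_outer_candidate P C F" unfolding is_outer_candidate_def using full CF eqP by blast
  have "outer_fence_facets P C \<le> num_facets F"
    unfolding outer_fence_facets_def using cand by (intro Least_le) blast
  also have "\<dots> \<le> card Hs" unfolding num_facets_def F_def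
    using facets_card_le[OF finHs hs] intF by (simp add: F_def)
  also have "\<dots> \<le> card boxHS + card (HS ` N \<delta>) + card (Hp ` X)"
    unfolding Hs_def by (meson add_mono card_Un_le le_trans order_refl)
  also have "\<dots> \<le> 2 * DIM('a) + card (N \<delta>) + card X"
    using card_boxHS by (intro add_mono card_image_le finite_N finX) auto
  finally show ?thesis by (simp add: X_def)
qed

lemma inner_bound:
  assumes g: "good \<delta>" and P: "finite P"
  shows "inner_fence_vertices P C \<le> card (N \<delta>) + card (P \<inter> (C - Qin \<delta>))"
proof -
  have d: "0 < \<delta>" "\<delta> \<le> 1/4" and sm: "8 * \<delta>\<^sup>2 \<le> r" using g by (auto simp: good_def)
  have "\<delta>\<^sup>2 > 0" using d by simp
  then have sm2: "4 * \<delta>\<^sup>2 < r" using sm by linarith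
  define X where "X = P \<inter> (C - Qin \<delta>)"
  define V where "V = p ` N \<delta> \<union> X"
  define F where "F = convex hull V"
  have finV: "finite V" using P finite_N by (simp add: V_def X_def)
  have QF: "Qin \<delta> \<subseteq> F" unfolding Qin_def F_def V_def by (intro hull_mono) blast
  have FC: "F \<subseteq> C" unfolding F_def V_def X_def using pC convC by (intro hull_minimal) auto
  have "ball c0 (r / 2) \<subseteq> interior F"
    using ball_Qin[OF d sm2] QF interior_mono interior_cball by (metis order_trans)
  then have intF: "interior F \<noteq> {}" using rpos centre_in_ball[of c0 "r/2"] by auto
  have pt: "polytope F" unfolding polytope_def F_def using finV by blast
  have full: "full_polytope F" unfolding full_polytope_def
    using pt polytope_imp_closed polytope_imp_convex aff_dim_nonempty_interior[OF intF] by blast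
  have eqP: "C \<inter> P = F \<inter> P"
  proof
    show "F \<inter> P \<subseteq> C \<inter> P" using FC by blast
    show "C \<inter> P \<subseteq> F \<inter> P"
    proof
      fix y assume y: "y \<in> C \<inter> P"
      show "y \<in> F \<inter> P"
      proof (cases "y \<in> Qin \<delta>")
        case True then show ?thesis using QF y by blast
      next
        case False
        then have "y \<in> V" using y by (auto simp: V_def X_def)
        then show ?thesis using y hull_subset[of V convex] by (auto simp: F_def)
      qed
    qed
  qed
  have cand: "is_inner_candidate P C F" unfolding is_inner_candidate_def using full FC eqP by blast
  have "inner_fence_vertices P C \<le> num_vertices F"
    unfolding inner_fence_vertices_def using cand by (intro Least_le) blast
  also have "\<dots> \<le> card V" unfolding F_def by (rule vertices_hull_le[OF finV])
  also have "\<dots> \<le> card (p ` N \<delta>) + card X" unfolding V_def by (rule card_Un_le)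
  also have "\<dots> \<le> card (N \<delta>) + card X" using card_image_le[OF finite_N] by simp
  finally show ?thesis by (simp add: X_def)
qed

lemma price_bound:
  assumes g: "good \<delta>" and P: "finite P"
  shows "price P C \<le> 2 * card (N \<delta>) + 2 * DIM('a) + card (P \<inter> (C - Qin \<delta>)) + card (P \<inter> (Qout \<delta> - C))"
  using inner_bound[OF assms] outer_bound[OF assms] unfolding price_def by linarith

end

context cbody begin

definition "VV = (2 ^ DIM('a) - 1) * (8 / r) * measure lborel C"

lemma VV_nn: "VV \<ge> 0"
proof -
  have "(2::real) ^ DIM('a) \<ge> 1" by simp
  then show ?thesis unfolding VV_def using rpos by (intro mult_nonneg_nonneg) auto
qed

lemma region_int:
  assumes "R0 \<subseteq> C" "R0 \<in> sets borel" "measure lborel R0 \<le> VV * \<delta>\<^sup>2"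
  shows "(\<integral>\<^sup>+ \<omega>. (\<Sum>i<n. indicator R0 (\<omega> i)) \<partial>(unit_cube_sample n :: (nat \<Rightarrow> 'a) measure))
           \<le> ennreal (real n * (VV * \<delta>\<^sup>2))"
proof -
  have "emeasure lborel R0 \<le> emeasure lborel C" using assms(1) compC by (intro emeasure_mono) (auto simp: borel_compact)
  also have "\<dots> < top" using fmeasurable_compact[OF compC] by (simp add: fmeasurable_def)
  finally have fin: "emeasure lborel R0 \<noteq> top" by simp
  have "(\<integral>\<^sup>+ \<omega>. (\<Sum>i<n. indicator R0 (\<omega> i)) \<partial>(unit_cube_sample n :: (nat \<Rightarrow> 'a) measure))
         \<le> of_nat n * emeasure lborel R0" by (rule int_ind[OF assms(2)])
  also have "\<dots> = ennreal (real n * measure lborel R0)"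
    using emeasure_eq_ennreal_measure[OF fin] by (simp add: ennreal_of_nat_eq_real_of_nat ennreal_mult'')
  also have "\<dots> \<le> ennreal (real n * (VV * \<delta>\<^sup>2))"
    using assms(3) by (intro ennreal_leI mult_left_mono) auto
  finally show ?thesis .
qed

lemma exp_bound:
  assumes g: "good \<delta>"
  shows "(\<integral>\<^sup>+ \<omega>. ennreal (real (price (\<omega> ` {..<n}) C)) \<partial>(unit_cube_sample n :: (nat \<Rightarrow> 'a) measure))
          \<le> ennreal (real (2 * card (N \<delta>) + 2 * DIM('a)) + real n * (2 * (VV * \<delta>\<^sup>2)))"
proof -
  let ?P = "unit_cube_sample n :: (nat \<Rightarrow> 'a) measure"
  define R1 where "R1 = C - Qin \<delta>"
  define R2 where "R2 = Qout \<delta> - C"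
  define c where "c = real (2 * card (N \<delta>) + 2 * DIM('a))"
  have R1b: "R1 \<in> sets borel" unfolding R1_def using compC Qin_props(1) by (auto simp: borel_compact)
  have R2b: "R2 \<in> sets borel" unfolding R2_def using compC Qout_compact by (auto simp: borel_compact)
  have ptw: "ennreal (real (price (\<omega> ` {..<n}) C))
      \<le> ennreal c + (\<Sum>i<n. indicator R1 (\<omega> i)) + (\<Sum>i<n. indicator R2 (\<omega> i))" for \<omega> :: "nat \<Rightarrow> 'a"
  proof -
    have "real (price (\<omega> ` {..<n}) C) \<le> c + real (card (\<omega> ` {..<n} \<inter> R1)) + real (card (\<omega> ` {..<n} \<inter> R2))"
      using price_bound[OF g, of "\<omega> ` {..<n}"] unfolding c_def R1_def R2_def by simp
    then have "ennreal (real (price (\<omega> ` {..<n}) C))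
        \<le> ennreal (c + real (card (\<omega> ` {..<n} \<inter> R1)) + real (card (\<omega> ` {..<n} \<inter> R2)))"
      by (rule ennreal_leI)
    also have "\<dots> = ennreal c + ennreal (real (card (\<omega> ` {..<n} \<inter> R1))) + ennreal (real (card (\<omega> ` {..<n} \<inter> R2)))"
      unfolding c_def by simp
    also have "\<dots> \<le> ennreal c + (\<Sum>i<n. indicator R1 (\<omega> i)) + (\<Sum>i<n. indicator R2 (\<omega> i))"
      by (intro add_mono card_le_ind order_refl)
    finally show ?thesis .
  qed
  have v1: "measure lborel R1 \<le> VV * \<delta>\<^sup>2" using vol_bounds(1)[OF g] by (simp add: R1_def VV_def)
  have v2: "measure lborel R2 \<le> VV * \<delta>\<^sup>2" using vol_bounds(2)[OF g] by (simp add: R2_def VV_def)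
  have i1: "(\<integral>\<^sup>+ \<omega>. (\<Sum>i<n. indicator R1 (\<omega> i)) \<partial>?P) \<le> ennreal (real n * (VV * \<delta>\<^sup>2))"
    using region_int[OF _ R1b v1] by (auto simp: R1_def)
  have i2: "(\<integral>\<^sup>+ \<omega>. (\<Sum>i<n. indicator R2 (\<omega> i)) \<partial>?P) \<le> ennreal (real n * (VV * \<delta>\<^sup>2))"
  proof -
    have "emeasure lborel R2 \<le> emeasure lborel (Qout \<delta>)" unfolding R2_def using Qout_compact
      by (intro emeasure_mono) (auto simp: borel_compact)
    also have "\<dots> < top" using fmeasurable_compact[OF Qout_compact] by (simp add: fmeasurable_def)
    finally have fin: "emeasure lborel R2 \<noteq> top" by simp
    have "(\<integral>\<^sup>+ \<omega>. (\<Sum>i<n. indicator R2 (\<omega> i)) \<partial>?P) \<le> of_nat n * emeasure lborel R2" by (rule int_ind[OF R2b])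
    also have "\<dots> = ennreal (real n * measure lborel R2)"
      using emeasure_eq_ennreal_measure[OF fin] by (simp add: ennreal_of_nat_eq_real_of_nat ennreal_mult'')
    also have "\<dots> \<le> ennreal (real n * (VV * \<delta>\<^sup>2))"
      using v2 by (intro ennreal_leI mult_left_mono) auto
    finally show ?thesis .
  qed
  have "(\<integral>\<^sup>+ \<omega>. ennreal (real (price (\<omega> ` {..<n}) C)) \<partial>?P)
      \<le> (\<integral>\<^sup>+ \<omega>. (ennreal c + (\<Sum>i<n. indicator R1 (\<omega> i)) + (\<Sum>i<n. indicator R2 (\<omega> i))) \<partial>?P)"
    using ptw by (intro nn_integral_mono) auto
  also have "\<dots> = (\<integral>\<^sup>+ \<omega>. (ennreal c + (\<Sum>i<n. indicator R1 (\<omega> i))) \<partial>?P) + (\<integral>\<^sup>+ \<omega>. (\<Sum>i<n. indicator R2 (\<omega> i)) \<partial>?P)"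
    using meas_ind[OF R1b] meas_ind[OF R2b] by (intro nn_integral_add) auto
  also have "(\<integral>\<^sup>+ \<omega>. (ennreal c + (\<Sum>i<n. indicator R1 (\<omega> i))) \<partial>?P) = (\<integral>\<^sup>+ \<omega>. ennreal c \<partial>?P) + (\<integral>\<^sup>+ \<omega>. (\<Sum>i<n. indicator R1 (\<omega> i)) \<partial>?P)"
    using meas_ind[OF R1b] by (intro nn_integral_add) auto
  also have "(\<integral>\<^sup>+ \<omega>. ennreal c \<partial>?P) = ennreal c"
  proof -
    have "emeasure ?P (space ?P) = 1" by (rule prob_space.emeasure_space_1[OF prob_sample])
    then show ?thesis by simp
  qed
  also have "ennreal c + (\<integral>\<^sup>+ \<omega>. (\<Sum>i<n. indicator R1 (\<omega> i)) \<partial>?P) + (\<integral>\<^sup>+ \<omega>. (\<Sum>i<n. indicator R2 (\<omega> i)) \<partial>?P)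
      \<le> ennreal c + ennreal (real n * (VV * \<delta>\<^sup>2)) + ennreal (real n * (VV * \<delta>\<^sup>2))"
    using i1 i2 by (intro add_mono order_refl)
  also have "\<dots> = ennreal (c + real n * (2 * (VV * \<delta>\<^sup>2)))"
    using VV_nn by (simp add: c_def ennreal_plus[symmetric] del: ennreal_plus)
  finally show ?thesis unfolding c_def .
qed

end

context cbody begin

lemma main_bound:
  "\<exists>K::real. \<forall>n::nat. n \<ge> 1 \<longrightarrow>
     (\<integral>\<^sup>+ \<omega>. ennreal (real (price (\<omega> ` {..<n}) C)) \<partial>(unit_cube_sample n :: (nat \<Rightarrow> 'a) measure))
       \<le> ennreal (K * real n powr (1 - 2 / (real DIM('a) + 1)))"
proof -
  define d where "d = DIM('a)"
  have d1: "d \<ge> 1" unfolding d_def using DIM_positive by (simp add: Suc_le_eq)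
  define \<delta>0 where "\<delta>0 = min (1/4) (sqrt (r / 8))"
  have \<delta>0pos: "\<delta>0 > 0" using rpos by (simp add: \<delta>0_def)
  have \<delta>0le: "\<delta>0 \<le> 1/4" by (simp add: \<delta>0_def)
  have \<delta>0sq: "\<delta>0\<^sup>2 \<le> r / 8"
  proof -
    have "\<delta>0 \<le> sqrt (r / 8)" by (simp add: \<delta>0_def)
    then have "\<delta>0\<^sup>2 \<le> (sqrt (r / 8))\<^sup>2" using \<delta>0pos by (intro power_mono) auto
    then show ?thesis using rpos by simp
  qed
  define A where "A = (2 * R' * d + 2) / \<delta>0"
  have Apos: "A \<ge> 0" using \<delta>0pos R'pos by (simp add: A_def)
  define K where "K = 4 * d * A ^ (d - 1) + 2 * d + 2 * VV * \<delta>0\<^sup>2"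
  have main: "(\<integral>\<^sup>+ \<omega>. ennreal (real (price (\<omega> ` {..<n}) C)) \<partial>(unit_cube_sample n :: (nat \<Rightarrow> 'a) measure))
       \<le> ennreal (K * real n powr (1 - 2 / (real DIM('a) + 1)))" if n: "n \<ge> 1" for n :: nat
  proof -
    define x where "x = real n powr (1 / (real d + 1))"
    have x1: "x \<ge> 1" unfolding x_def using n by (intro ge_one_powr_ge_zero) auto
    have xpos: "x > 0" using x1 by simp
    have xpow: "x ^ (d + 1) = real n"
    proof -
      have "x ^ (d + 1) = x powr real (d + 1)" by (rule powr_realpow[OF xpos, symmetric])
      also have "\<dots> = real n powr (1 / (real d + 1) * real (d + 1))" unfolding x_def by (rule powr_powr)
      also have "1 / (real d + 1) * real (d + 1) = 1" by (simp add: field_simps)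
      finally show ?thesis by simp
    qed
    have npow: "real n powr (1 - 2 / (real DIM('a) + 1)) = x ^ (d - 1)"
    proof -
      have "x ^ (d - 1) = x powr real (d - 1)" by (rule powr_realpow[OF xpos, symmetric])
      also have "\<dots> = real n powr (1 / (real d + 1) * real (d - 1))" unfolding x_def by (rule powr_powr)
      also have "1 / (real d + 1) * real (d - 1) = 1 - 2 / (real DIM('a) + 1)"
        using d1 by (simp add: d_def of_nat_diff field_simps)
      finally show ?thesis by simp
    qed
    have xd1: "x ^ (d - 1) \<ge> 1" using x1 by simp
    define \<delta> where "\<delta> = \<delta>0 / x"
    have \<delta>pos: "\<delta> > 0" using \<delta>0pos xpos by (simp add: \<delta>_def)
    have \<delta>le: "\<delta> \<le> \<delta>0" using \<delta>0pos x1 by (simp add: \<delta>_def divide_le_eq)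
    have g: "good \<delta>"
    proof -
      have "\<delta>\<^sup>2 \<le> \<delta>0\<^sup>2" using \<delta>le \<delta>pos by (intro power_mono) auto
      then show ?thesis unfolding good_def using \<delta>pos \<delta>le \<delta>0le \<delta>0sq by linarith
    qed
    have \<delta>1: "\<delta> \<le> 1" using \<delta>le \<delta>0le by linarith
    have m: "real (mm \<delta>) \<le> 2 * R' * d / \<delta> + 1"
    proof -
      have "0 \<le> 2 * R' * d / \<delta>" using R'pos \<delta>pos by simp
      then have "real (mm \<delta>) = real_of_int \<lceil>2 * R' * d / \<delta>\<rceil>" unfolding mm_def d_def by simp
      also have "\<dots> \<le> 2 * R' * d / \<delta> + 1" by (rule of_int_ceiling_le_add_one)
      finally show ?thesis .
    qed
    have m1: "real (mm \<delta>) + 1 \<le> A * x"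
    proof -
      have "2 \<le> 2 / \<delta>" using \<delta>pos \<delta>1 by (simp add: le_divide_eq)
      then have "real (mm \<delta>) + 1 \<le> (2 * R' * d + 2) / \<delta>" using m by (simp add: add_divide_distrib)
      also have "\<dots> = A * x" using xpos \<delta>0pos by (simp add: A_def \<delta>_def field_simps)
      finally show ?thesis .
    qed
    have cN: "real (card (N \<delta>)) \<le> 2 * d * A ^ (d - 1) * x ^ (d - 1)"
    proof -
      have "real (card (N \<delta>)) \<le> real (d * (2 * (mm \<delta> + 1) ^ (d - 1)))"
        using card_N[of \<delta>] unfolding d_def by linarith
      also have "\<dots> = d * (2 * (real (mm \<delta>) + 1) ^ (d - 1))" by (simp only: of_nat_mult of_nat_power of_nat_add of_nat_1 of_nat_numeral)
      also have "\<dots> \<le> d * (2 * (A * x) ^ (d - 1))"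
        using m1 by (intro mult_left_mono power_mono) auto
      also have "\<dots> = 2 * d * A ^ (d - 1) * x ^ (d - 1)" by (simp add: power_mult_distrib)
      finally show ?thesis .
    qed
    have nd: "real n * \<delta>\<^sup>2 = \<delta>0\<^sup>2 * x ^ (d - 1)"
    proof -
      have "x ^ (d + 1) = x ^ (d - 1) * x\<^sup>2" using d1 by (simp add: power_add[symmetric])
      then have "real n = x ^ (d - 1) * x\<^sup>2" using xpow by simp
      then show ?thesis using xpos by (simp add: \<delta>_def power_divide field_simps)
    qed
    have "(\<integral>\<^sup>+ \<omega>. ennreal (real (price (\<omega> ` {..<n}) C)) \<partial>(unit_cube_sample n :: (nat \<Rightarrow> 'a) measure))
        \<le> ennreal (real (2 * card (N \<delta>) + 2 * DIM('a)) + real n * (2 * (VV * \<delta>\<^sup>2)))"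
      by (rule exp_bound[OF g])
    also have "\<dots> \<le> ennreal (K * x ^ (d - 1))"
    proof (rule ennreal_leI)
      have "real (2 * card (N \<delta>) + 2 * DIM('a)) = 2 * real (card (N \<delta>)) + 2 * d" by (simp add: d_def)
      also have "\<dots> \<le> 4 * d * A ^ (d - 1) * x ^ (d - 1) + 2 * d * x ^ (d - 1)"
      proof -
        have "2 * real d * 1 \<le> 2 * real d * x ^ (d - 1)" by (rule mult_left_mono[OF xd1]) simp
        moreover have "2 * real (card (N \<delta>)) \<le> 2 * (2 * real d * A ^ (d - 1) * x ^ (d - 1))"
          using cN by simp
        moreover have "2 * (2 * real d * A ^ (d - 1) * x ^ (d - 1)) = 4 * real d * A ^ (d - 1) * x ^ (d - 1)"
          by simp
        ultimately show ?thesis by linarith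
      qed
      finally have a: "real (2 * card (N \<delta>) + 2 * DIM('a)) \<le> 4 * d * A ^ (d - 1) * x ^ (d - 1) + 2 * d * x ^ (d - 1)" .
      have "real n * (2 * (VV * \<delta>\<^sup>2)) = 2 * VV * (real n * \<delta>\<^sup>2)" by (simp add: algebra_simps)
      also have "\<dots> = 2 * VV * (\<delta>0\<^sup>2 * x ^ (d - 1))" by (simp only: nd)
      finally have b: "real n * (2 * (VV * \<delta>\<^sup>2)) = 2 * VV * (\<delta>0\<^sup>2 * x ^ (d - 1))" .
      have k: "K * x ^ (d - 1) = 4 * d * A ^ (d - 1) * x ^ (d - 1) + 2 * d * x ^ (d - 1) + 2 * VV * (\<delta>0\<^sup>2 * x ^ (d - 1))"
        by (simp add: K_def algebra_simps)
      show "real (2 * card (N \<delta>) + 2 * DIM('a)) + real n * (2 * (VV * \<delta>\<^sup>2)) \<le> K * x ^ (d - 1)"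
        using a b k by linarith
    qed
    also have "\<dots> = ennreal (K * real n powr (1 - 2 / (real DIM('a) + 1)))" by (simp add: npow)
    finally show ?thesis .
  qed
  then show ?thesis by blast
qed

end

theorem lemmaB3:
  fixes C :: "'a::euclidean_space set" and c :: real
  assumes "c \<le> 1"
    and "convex_body C"
    and "measure lborel C \<ge> c"
  shows "\<exists>K::real. \<forall>n::nat. n \<ge> 1 \<longrightarrow>
           (\<integral>\<^sup>+ \<omega>. ennreal (real (price (\<omega> ` {..<n}) C)) \<partial>(unit_cube_sample n :: (nat \<Rightarrow> 'a) measure))
             \<le> ennreal (K * real n powr (1 - 2 / (real DIM('a) + 1)))"
proof -
  have cb: "compact C" "convex C" "interior C \<noteq> {}" using assms(2) by (auto simp: convex_body_def)
  obtain c0 where c0: "c0 \<in> interior C" using cb(3) by blast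
  obtain e where e: "e > 0" "ball c0 e \<subseteq> interior C"
    using open_interior c0 by (meson openE)
  have "cball c0 (e / 2) \<subseteq> ball c0 e" using e(1) by (auto simp: subset_iff dist_norm)
  then have ballC: "cball c0 (e / 2) \<subseteq> C" using e(2) interior_subset by blast
  obtain a where a: "\<forall>x\<in>C. norm x \<le> a" using compact_imp_bounded[OF cb(1)] bounded_iff by blast
  have "C \<subseteq> cball 0 a" using a by (auto simp: dist_norm)
  then have "cbody C c0 (e / 2) a" using cb ballC e(1) by unfold_locales auto
  then show ?thesis by (rule cbody.main_bound)
qed

end
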